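(* Let $k\geq 3$ and let $G$ be a diregular $(2,k,+3)$-digraph. Let $u,v$ be distinct vertices with exactly one common out-neighbour $u_2$, and write $N^+(u)=\{u_1,u_2\}$, $N^+(v)=\{v_1,u_2\}$. Then $v_1\in O(u)$ or $u_1\in O(v)$.
   Context: A digraph is $k$-geodetic if for every ordered pair of vertices $x,y$ there is at most one directed path from $x$ to $y$ of length at most $k$ (the trivial path counts). A diregular $(2,k,+3)$-digraph is a $k$-geodetic digraph of order $1+2+\dots+2^k+3$ in which every vertex has in- and out-degree $2$. $N^+(x)$ is the set of out-neighbours of $x$. $d(x,y)$ is the directed distance; $O(x)=\{y: d(x,y)\geq k+1\}$ is the outlier set of $x$. *)

theory Defs
  imports Main
begin

text \<open>A digraph is given by a vertex set V and an arc relation A with A \<subseteq> V \<times> V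
  (no multiple arcs). Walks are nonempty vertex lists with consecutive pairs in A.\<close>

definition out_nbrs :: "('a \<times> 'a) set \<Rightarrow> 'a \<Rightarrow> 'a set" where
  "out_nbrs A x = {y. (x, y) \<in> A}"

definition in_nbrs :: "('a \<times> 'a) set \<Rightarrow> 'a \<Rightarrow> 'a set" where
  "in_nbrs A x = {y. (y, x) \<in> A}"

definition is_walk :: "('a \<times> 'a) set \<Rightarrow> 'a list \<Rightarrow> bool" where
  "is_walk A p \<longleftrightarrow> p \<noteq> [] \<and> (\<forall>i. Suc i < length p \<longrightarrow> (p ! i, p ! Suc i) \<in> A)"

definition walk_len :: "'a list \<Rightarrow> nat" where
  "walk_len p = length p - 1"

definition k_geodetic :: "'a set \<Rightarrow> ('a \<times> 'a) set \<Rightarrow> nat \<Rightarrow> bool" where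
  "k_geodetic V A k \<longleftrightarrow>
     (\<forall>x\<in>V. \<forall>y\<in>V. \<forall>p q. is_walk A p \<and> is_walk A q \<and>
        hd p = x \<and> last p = y \<and> hd q = x \<and> last q = y \<and>
        walk_len p \<le> k \<and> walk_len q \<le> k \<longrightarrow> p = q)"

definition diregular_2k3 :: "'a set \<Rightarrow> ('a \<times> 'a) set \<Rightarrow> nat \<Rightarrow> bool" where
  "diregular_2k3 V A k \<longleftrightarrow>
     finite V \<and> A \<subseteq> V \<times> V \<and> k_geodetic V A k \<and>
     card V = (\<Sum>i\<le>k. 2 ^ i) + 3 \<and>
     (\<forall>x\<in>V. card (out_nbrs A x) = 2 \<and> card (in_nbrs A x) = 2)"

text \<open>Outlier set: vertices at distance at least k+1 (including unreachable ones),
  i.e. not reachable by a walk of length at most k.\<close>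
definition outliers :: "'a set \<Rightarrow> ('a \<times> 'a) set \<Rightarrow> nat \<Rightarrow> 'a \<Rightarrow> 'a set" where
  "outliers V A k x = {y\<in>V. \<not> (\<exists>p. is_walk A p \<and> hd p = x \<and> last p = y \<and> walk_len p \<le> k)}"

end

theory Submission
  imports Defs
begin

definition walkl :: "('a \<times> 'a) set \<Rightarrow> nat \<Rightarrow> 'a \<Rightarrow> 'a \<Rightarrow> bool" where
  "walkl A m x y \<longleftrightarrow> (\<exists>p. is_walk A p \<and> hd p = x \<and> last p = y \<and> length p = Suc m)"

lemma is_walk_single: "is_walk A [x]"
  by (simp add: is_walk_def)

lemma is_walk_Cons: "is_walk A (x # p) \<longleftrightarrow> (p = [] \<or> ((x, hd p) \<in> A \<and> is_walk A p))"
proof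
  assume h: "is_walk A (x # p)"
  show "p = [] \<or> ((x, hd p) \<in> A \<and> is_walk A p)"
  proof (cases "p = []")
    case False
    have "Suc 0 < length (x#p)" using False by simp
    hence "((x#p)!0, (x#p)!Suc 0) \<in> A" using h unfolding is_walk_def by blast
    hence 1: "(x, hd p) \<in> A" using False by (simp add: hd_conv_nth)
    have "is_walk A p" unfolding is_walk_def
    proof (intro conjI allI impI)
      show "p \<noteq> []" by fact
      fix i assume "Suc i < length p"
      hence "Suc (Suc i) < length (x#p)" by simp
      hence "((x#p)! Suc i, (x#p)!Suc (Suc i)) \<in> A" using h unfolding is_walk_def by blast
      thus "(p!i, p!Suc i) \<in> A" by simp
    qed
    thus ?thesis using 1 by simp
  qed simp
next
  assume h: "p = [] \<or> ((x, hd p) \<in> A \<and> is_walk A p)"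
  show "is_walk A (x#p)"
    unfolding is_walk_def
  proof (intro conjI allI impI)
    show "x # p \<noteq> []" by simp
    fix i assume i: "Suc i < length (x#p)"
    show "((x#p)!i, (x#p)!Suc i) \<in> A"
    proof (cases i)
      case 0
      then have "p \<noteq> []" using i by auto
      then show ?thesis using h 0 by (simp add: hd_conv_nth)
    next
      case (Suc j)
      then have "p \<noteq> []" and "Suc j < length p" using i by auto
      then show ?thesis using h Suc unfolding is_walk_def by auto
    qed
  qed
qed

lemma walkl_0: "walkl A 0 x y \<longleftrightarrow> y = x"
proof
  assume "walkl A 0 x y"
  then obtain p where "is_walk A p" "hd p = x" "last p = y" "length p = Suc 0"
    unfolding walkl_def by blast
  then show "y = x" by (auto simp: length_Suc_conv)
next
  assume "y = x"
  then show "walkl A 0 x y" unfolding walkl_def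
    by (intro exI[of _ "[x]"]) (simp add: is_walk_single)
qed

lemma walkl_Suc: "walkl A (Suc m) x z \<longleftrightarrow> (\<exists>y. (x,y) \<in> A \<and> walkl A m y z)"
proof
  assume "walkl A (Suc m) x z"
  then obtain p where p: "is_walk A p" "hd p = x" "last p = z" "length p = Suc (Suc m)"
    unfolding walkl_def by blast
  then obtain a q where pq: "p = a # q" "length q = Suc m" by (auto simp: length_Suc_conv)
  then have q: "q \<noteq> []" by auto
  have "a = x" using p pq by simp
  then have "(x, hd q) \<in> A" "is_walk A q" using p(1) pq q is_walk_Cons by metis+
  moreover have "last q = z" using p pq q by simp
  ultimately show "\<exists>y. (x,y) \<in> A \<and> walkl A m y z" unfolding walkl_def using pq by blast
next
  assume "\<exists>y. (x,y) \<in> A \<and> walkl A m y z"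
  then obtain y q where "(x,y) \<in> A" "is_walk A q" "hd q = y" "last q = z" "length q = Suc m"
    unfolding walkl_def by blast
  moreover then have "q \<noteq> []" by auto
  ultimately show "walkl A (Suc m) x z" unfolding walkl_def
    by (intro exI[of _ "x # q"]) (simp add: is_walk_Cons)
qed

lemma walkl_arc: "walkl A (Suc 0) x y \<longleftrightarrow> (x,y) \<in> A"
  by (simp add: walkl_Suc walkl_0)

lemma walkl_trans: "walkl A i x y \<Longrightarrow> walkl A j y z \<Longrightarrow> walkl A (i+j) x z"
  by (induction i arbitrary: x) (auto simp: walkl_0 walkl_Suc)

lemma walkl_snoc: "walkl A m x y \<Longrightarrow> (y,z) \<in> A \<Longrightarrow> walkl A (Suc m) x z"
  using walkl_trans[of A m x y "Suc 0" z] by (simp add: walkl_arc)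

lemma walkl_split: "walkl A (i+j) x z \<Longrightarrow> \<exists>y. walkl A i x y \<and> walkl A j y z"
  by (induction i arbitrary: x) (auto simp: walkl_0 walkl_Suc, blast)

lemma walkl_V: "A \<subseteq> V \<times> V \<Longrightarrow> x \<in> V \<Longrightarrow> walkl A m x y \<Longrightarrow> y \<in> V"
  by (induction m arbitrary: x) (auto simp: walkl_0 walkl_Suc)

lemma walk_last_V:
  assumes "A \<subseteq> V \<times> V" "is_walk A p" "hd p \<in> V" shows "last p \<in> V"
proof -
  have "p \<noteq> []" using assms(2) by (simp add: is_walk_def)
  then have "walkl A (length p - 1) (hd p) (last p)" unfolding walkl_def using assms by auto
  then show ?thesis using walkl_V assms by metis
qed

lemma geo_list:
  assumes "k_geodetic V A k" "A \<subseteq> V \<times> V" "is_walk A p" "is_walk A q" "hd p = hd q"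
    "last p = last q" "hd p \<in> V" "length p \<le> Suc k" "length q \<le> Suc k"
  shows "p = q"
proof -
  have "last p \<in> V" using walk_last_V assms by metis
  moreover have "walk_len p \<le> k" "walk_len q \<le> k" using assms by (auto simp: walk_len_def)
  ultimately show ?thesis using assms(1,3-7) unfolding k_geodetic_def by metis
qed

lemma geo:
  assumes "k_geodetic V A k" "A \<subseteq> V \<times> V" "x \<in> V" "walkl A i x z" "walkl A j x z" "i \<le> k" "j \<le> k"
  shows "i = j"
proof -
  obtain p where p: "is_walk A p" "hd p = x" "last p = z" "length p = Suc i"
    using assms(4) walkl_def by metis
  obtain q where q: "is_walk A q" "hd q = x" "last q = z" "length q = Suc j"
    using assms(5) walkl_def by metis
  have "p = q" using geo_list[OF assms(1,2) p(1) q(1)] p q assms by simp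
  then show ?thesis using p q by simp
qed

lemma geo2:
  assumes "k_geodetic V A k" "A \<subseteq> V \<times> V" "x \<in> V" "(x,y1) \<in> A" "(x,y2) \<in> A"
    "walkl A i y1 z" "walkl A j y2 z" "Suc i \<le> k" "Suc j \<le> k"
  shows "y1 = y2"
proof -
  obtain p where p: "is_walk A p" "hd p = y1" "last p = z" "length p = Suc i"
    using assms(6) walkl_def by metis
  obtain q where q: "is_walk A q" "hd q = y2" "last q = z" "length q = Suc j"
    using assms(7) walkl_def by metis
  have ne: "p \<noteq> []" "q \<noteq> []" using p q by auto
  have "is_walk A (x#p)" "is_walk A (x#q)" using p q assms(4,5) by (auto simp: is_walk_Cons)
  then have "x # p = x # q" using geo_list[OF assms(1,2), of "x#p" "x#q"] p q ne assms by simp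
  then show ?thesis using p q by simp
qed


definition Pw :: "('a \<times> 'a) set \<Rightarrow> nat \<Rightarrow> 'a \<Rightarrow> 'a list set" where
  "Pw A j x = {p. is_walk A p \<and> hd p = x \<and> length p \<le> Suc j}"

lemma Pw_0: "Pw A 0 x = {[x]}"
proof (rule set_eqI)
  fix p show "p \<in> Pw A 0 x \<longleftrightarrow> p \<in> {[x]}"
    by (cases p) (auto simp: Pw_def is_walk_def)
qed

lemma Pw_Suc: "Pw A (Suc j) x = insert [x] (\<Union>y\<in>out_nbrs A x. Cons x ` Pw A j y)"
proof (rule set_eqI)
  fix p
  show "p \<in> Pw A (Suc j) x \<longleftrightarrow> p \<in> insert [x] (\<Union>y\<in>out_nbrs A x. Cons x ` Pw A j y)"
  proof
    assume h: "p \<in> Pw A (Suc j) x"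
    then have "p \<noteq> []" by (simp add: Pw_def is_walk_def)
    then obtain a q where pq: "p = a # q" by (cases p) auto
    have a: "a = x" using h pq by (simp add: Pw_def)
    show "p \<in> insert [x] (\<Union>y\<in>out_nbrs A x. Cons x ` Pw A j y)"
    proof (cases "q = []")
      case True then show ?thesis using pq a by simp
    next
      case False
      then have "(x, hd q) \<in> A" "is_walk A q" using h pq a by (auto simp: Pw_def is_walk_Cons)
      moreover have "length q \<le> Suc j" using h pq by (simp add: Pw_def)
      ultimately have "q \<in> Pw A j (hd q)" "hd q \<in> out_nbrs A x"
        by (auto simp: Pw_def out_nbrs_def)
      then show ?thesis using pq a by blast
    qed
  next
    assume "p \<in> insert [x] (\<Union>y\<in>out_nbrs A x. Cons x ` Pw A j y)"
    then show "p \<in> Pw A (Suc j) x"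
    proof
      assume "p = [x]" then show ?thesis by (simp add: Pw_def is_walk_single)
    next
      assume "p \<in> (\<Union>y\<in>out_nbrs A x. Cons x ` Pw A j y)"
      then obtain y q where "(x,y) \<in> A" "q \<in> Pw A j y" "p = x # q"
        by (auto simp: out_nbrs_def)
      moreover then have "q \<noteq> []" by (auto simp: Pw_def is_walk_def)
      ultimately show ?thesis by (auto simp: Pw_def is_walk_Cons)
    qed
  qed
qed

lemma Pw_count:
  assumes "A \<subseteq> V \<times> V" "\<forall>y\<in>V. card (out_nbrs A y) = 2" "x \<in> V"
  shows "finite (Pw A j x) \<and> card (Pw A j x) = 2^(Suc j) - 1"
  using assms(3)
proof (induction j arbitrary: x)
  case 0
  then show ?case by (simp add: Pw_0)
next
  case (Suc j)
  let ?N = "out_nbrs A x"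
  let ?U = "\<Union>y\<in>?N. Cons x ` Pw A j y"
  have cN: "card ?N = 2" using assms(2) Suc.prems by blast
  then have fN: "finite ?N" by (intro card_ge_0_finite) simp
  have NV: "?N \<subseteq> V" using assms(1) Suc.prems by (auto simp: out_nbrs_def)
  have fi: "\<forall>y\<in>?N. finite (Cons x ` Pw A j y)" using Suc.IH NV by blast
  have dis: "\<forall>y1\<in>?N. \<forall>y2\<in>?N. y1 \<noteq> y2 \<longrightarrow> (Cons x ` Pw A j y1) \<inter> (Cons x ` Pw A j y2) = {}"
  proof (intro ballI impI)
    fix y1 y2 assume "y1 \<in> ?N" "y2 \<in> ?N" "y1 \<noteq> y2"
    then have "Pw A j y1 \<inter> Pw A j y2 = {}" unfolding Pw_def by blast
    then show "(Cons x ` Pw A j y1) \<inter> (Cons x ` Pw A j y2) = {}"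
      by (simp add: image_Int[symmetric])
  qed
  have fU: "finite ?U" by (intro finite_UN_I fN) (use fi in blast)
  have "card ?U = (\<Sum>y\<in>?N. card (Cons x ` Pw A j y))"
    by (rule card_UN_disjoint[OF fN fi dis])
  also have "\<dots> = (\<Sum>y\<in>?N. card (Pw A j y))"
    by (intro sum.cong refl card_image) auto
  also have "\<dots> = (\<Sum>y\<in>?N. 2^(Suc j) - 1)"
    using Suc.IH NV by (intro sum.cong refl) blast
  also have "\<dots> = 2 * (2^(Suc j) - 1)" using cN by simp
  finally have cU: "card ?U = 2 * (2^(Suc j) - 1)" .
  have nin: "[x] \<notin> ?U" by (auto simp: Pw_def is_walk_def)
  have t: "(1::nat) \<le> 2^j" by simp
  have "Suc (2 * (2^(Suc j) - 1)) = 2^(Suc (Suc j)) - (1::nat)"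
    using t by (simp only: power_Suc)
    have e: "Pw A (Suc j) x = insert [x] ?U" by (rule Pw_Suc)
  have "card (insert [x] ?U) = Suc (card ?U)" using fU nin by simp
  then show ?case using fU e cU \<open>Suc (2 * (2^(Suc j) - 1)) = 2^(Suc (Suc j)) - (1::nat)\<close>
    by simp
qed

lemma sum_pow2: "(\<Sum>i\<le>k. (2::nat)^i) = 2^(Suc k) - 1"
  by (induction k) auto

lemma outliers_card:
  assumes "diregular_2k3 V A k" "x \<in> V"
  shows "finite (outliers V A k x) \<and> card (outliers V A k x) = 3"
proof -
  have fV: "finite V" and AV: "A \<subseteq> V \<times> V" and kg: "k_geodetic V A k"
    and cV: "card V = (\<Sum>i\<le>k. 2 ^ i) + 3"
    and deg: "\<forall>y\<in>V. card (out_nbrs A y) = 2"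
    using assms(1) unfolding diregular_2k3_def by auto
  let ?R = "last ` Pw A k x"
  have eq: "outliers V A k x = V - ?R"
  proof (rule set_eqI)
    fix y
    show "y \<in> outliers V A k x \<longleftrightarrow> y \<in> V - ?R"
    proof
      assume "y \<in> outliers V A k x"
      then show "y \<in> V - ?R" unfolding outliers_def Pw_def walk_len_def by auto
    next
      assume h: "y \<in> V - ?R"
      show "y \<in> outliers V A k x" unfolding outliers_def
      proof (intro CollectI conjI notI)
        show "y \<in> V" using h by simp
        assume "\<exists>p. is_walk A p \<and> hd p = x \<and> last p = y \<and> walk_len p \<le> k"
        then obtain p where "is_walk A p" "hd p = x" "last p = y" "walk_len p \<le> k" by blast
        then have "p \<in> Pw A k x" by (auto simp: Pw_def walk_len_def)
        then show False using h \<open>last p = y\<close> by blast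
      qed
    qed
  qed
  have inj: "inj_on last (Pw A k x)"
  proof (rule inj_onI)
    fix p q assume "p \<in> Pw A k x" "q \<in> Pw A k x" "last p = last q"
    then show "p = q" using geo_list[OF kg AV, of p q] assms(2) by (auto simp: Pw_def)
  qed
  have cP: "finite (Pw A k x)" "card (Pw A k x) = 2^(Suc k) - 1"
    using Pw_count[OF AV deg assms(2)] by auto
  have RV: "?R \<subseteq> V"
    using walk_last_V[OF AV] assms(2) by (auto simp: Pw_def)
  have cR: "card ?R = 2^(Suc k) - 1" using card_image[OF inj] cP by simp
  have "card (V - ?R) = card V - card ?R" using card_Diff_subset[OF finite_subset[OF RV fV] RV] .
  then have "card (V - ?R) = 3" using cR cV sum_pow2[of k] by simp
  then show ?thesis using eq fV by simp
qed


lemma outliers_iff: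
  "y \<in> outliers V A k x \<longleftrightarrow> y \<in> V \<and> \<not> (\<exists>m. m \<le> k \<and> walkl A m x y)"
proof -
  have "(\<exists>p. is_walk A p \<and> hd p = x \<and> last p = y \<and> walk_len p \<le> k)
        \<longleftrightarrow> (\<exists>m. m \<le> k \<and> walkl A m x y)"
  proof
    assume "\<exists>p. is_walk A p \<and> hd p = x \<and> last p = y \<and> walk_len p \<le> k"
    then obtain p where p: "is_walk A p" "hd p = x" "last p = y" "walk_len p \<le> k" by blast
    then have "p \<noteq> []" by (simp add: is_walk_def)
    then have "length p = Suc (length p - 1)" by simp
    then have "walkl A (length p - 1) x y" unfolding walkl_def using p by blast
    then show "\<exists>m. m \<le> k \<and> walkl A m x y" using p(4) unfolding walk_len_def by blast
  next
    assume "\<exists>m. m \<le> k \<and> walkl A m x y"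
    then show "\<exists>p. is_walk A p \<and> hd p = x \<and> last p = y \<and> walk_len p \<le> k"
      unfolding walkl_def walk_len_def by force
  qed
  then show ?thesis unfolding outliers_def by blast
qed

lemma stepA:
  assumes kg: "k_geodetic V A k" and AV: "A \<subseteq> V \<times> V" and k2: "2 \<le> k"
    and "u \<in> V" "v \<in> V" "(u,u1) \<in> A" "(u,u2) \<in> A" "(v,v1) \<in> A" "(v,u2) \<in> A"
    and "v1 \<noteq> u2" and un: "\<forall>y. (u,y) \<in> A \<longrightarrow> y = u1 \<or> y = u2"
    and w: "walkl A m u v1" and mk: "m \<le> k"
  shows "\<exists>a. Suc a \<le> k \<and> walkl A a u1 v1"
proof (cases m)
  case 0
  then have "v1 = u" using w by (simp add: walkl_0)
  then have "walkl A (Suc 0) v1 u2" using assms by (simp add: walkl_arc)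
  moreover have "walkl A 0 u2 u2" by (simp add: walkl_0)
  ultimately have "v1 = u2" using geo2[OF kg AV \<open>v \<in> V\<close> \<open>(v,v1) \<in> A\<close> \<open>(v,u2) \<in> A\<close>] k2 by simp
  then show ?thesis using assms by simp
next
  case (Suc m')
  then obtain y where y: "(u,y) \<in> A" "walkl A m' y v1" using w by (auto simp: walkl_Suc)
  show ?thesis
  proof (cases "y = u1")
    case True then show ?thesis using y Suc mk by blast
  next
    case False
    then have "y = u2" using un y by blast
    moreover have "walkl A 0 v1 v1" by (simp add: walkl_0)
    ultimately have "v1 = u2"
      using geo2[OF kg AV \<open>v \<in> V\<close> \<open>(v,v1) \<in> A\<close> \<open>(v,u2) \<in> A\<close>, of 0 v1 m'] y k2 Suc mk by simp
    then show ?thesis using assms by simp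
  qed
qed

lemma stepC:
  assumes kg: "k_geodetic V A k" and AV: "A \<subseteq> V \<times> V"
    and "v \<in> V" "v1 \<in> V" "(u,u1) \<in> A" "(u,u2) \<in> A" "(v,v1) \<in> A" "(v,u2) \<in> A"
    and "v1 \<noteq> u2" and b: "walkl A b v1 u1" "Suc b \<le> k"
    and c: "walkl A c v1 u" "Suc c \<le> k"
  shows False
proof -
  have "walkl A (Suc c) v1 u1" using walkl_snoc[OF c(1)] assms by simp
  then have "Suc c = b" using geo[OF kg AV \<open>v1 \<in> V\<close> _ b(1)] b c by simp
  have "walkl A (Suc c) v1 u2" using walkl_snoc[OF c(1)] assms by simp
  moreover have "walkl A 0 u2 u2" by (simp add: walkl_0)
  ultimately have "v1 = u2"
    using geo2[OF kg AV \<open>v \<in> V\<close> \<open>(v,v1) \<in> A\<close> \<open>(v,u2) \<in> A\<close>, of "Suc c" u2 0]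
      \<open>Suc c = b\<close> b by simp
  then show False using assms by simp
qed

lemma exists_walk:
  assumes AV: "A \<subseteq> V \<times> V" and deg: "\<forall>y\<in>V. card (out_nbrs A y) = 2" and "x \<in> V"
  shows "\<exists>t. walkl A m x t"
proof (induction m)
  case 0 then show ?case by (simp add: walkl_0)
next
  case (Suc m)
  then obtain t where t: "walkl A m x t" by blast
  then have "t \<in> V" using walkl_V AV assms(3) by metis
  then have "card (out_nbrs A t) = 2" using deg by blast
  then obtain t1 t2 where "out_nbrs A t = {t1, t2}" by (auto simp: card_2_iff)
  then have "(t, t1) \<in> A" by (auto simp: out_nbrs_def)
  then have "walkl A (Suc m) x t1" using walkl_snoc[OF t] by simp
  then show ?case by auto
qed

lemma other_nbr:
  assumes "card (out_nbrs A y) = 2"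
  shows "\<exists>y'. (y,y') \<in> A \<and> y' \<noteq> w"
proof -
  obtain t1 t2 where "out_nbrs A y = {t1, t2}" "t1 \<noteq> t2" using assms by (auto simp: card_2_iff)
  then show ?thesis by (auto simp: out_nbrs_def)
qed


theorem lemma5:
  fixes V :: "'a set" and A :: "('a \<times> 'a) set" and k :: nat
    and u v u1 u2 v1 :: 'a
  assumes "k \<ge> 3"
    and "diregular_2k3 V A k"
    and "u \<in> V" and "v \<in> V" and "u \<noteq> v"
    and "out_nbrs A u \<inter> out_nbrs A v = {u2}"
    and "out_nbrs A u = {u1, u2}"
    and "out_nbrs A v = {v1, u2}"
  shows "v1 \<in> outliers V A k u \<or> u1 \<in> outliers V A k v"
proof (rule ccontr)
  assume neg: "\<not> (v1 \<in> outliers V A k u \<or> u1 \<in> outliers V A k v)"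
  have fV: "finite V" and AV: "A \<subseteq> V \<times> V" and kg: "k_geodetic V A k"
    and deg: "\<forall>y\<in>V. card (out_nbrs A y) = 2"
    using assms(2) unfolding diregular_2k3_def by auto
  have k2: "2 \<le> k" using assms(1) by simp
  have uV: "u \<in> V" and vV: "v \<in> V" using assms by auto
  have a1: "(u,u1) \<in> A" "(u,u2) \<in> A" using assms(7) by (auto simp: out_nbrs_def set_eq_iff)
  have a2: "(v,v1) \<in> A" "(v,u2) \<in> A" using assms(8) by (auto simp: out_nbrs_def set_eq_iff)
  have un: "\<forall>y. (u,y) \<in> A \<longrightarrow> y = u1 \<or> y = u2" using assms(7) by (auto simp: out_nbrs_def set_eq_iff)
  have vn: "\<forall>y. (v,y) \<in> A \<longrightarrow> y = v1 \<or> y = u2" using assms(8) by (auto simp: out_nbrs_def set_eq_iff)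
  have "card {u1, u2} = 2" using deg uV assms(7) by metis
  then have u12: "u1 \<noteq> u2" by auto
  have "card {v1, u2} = 2" using deg vV assms(8) by metis
  then have v12: "v1 \<noteq> u2" by auto
  have uv1: "u1 \<noteq> v1"
  proof
    assume "u1 = v1"
    then have "u1 \<in> out_nbrs A u \<inter> out_nbrs A v" using assms(7,8) by simp
    then show False using assms(6) u12 by simp
  qed
  have u1V: "u1 \<in> V" and v1V: "v1 \<in> V" and u2V: "u2 \<in> V" using a1 a2 AV by auto
  obtain m1 where m1: "m1 \<le> k" "walkl A m1 u v1" using neg v1V outliers_iff by metis
  obtain m2 where m2: "m2 \<le> k" "walkl A m2 v u1" using neg u1V outliers_iff by metis
  obtain a where a: "Suc a \<le> k" "walkl A a u1 v1"
    using stepA[OF kg AV k2 uV vV a1 a2 v12 un m1(2) m1(1)] by blast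
  obtain b where b: "Suc b \<le> k" "walkl A b v1 u1"
    using stepA[OF kg AV k2 vV uV a2 a1 u12 vn m2(2) m2(1)] by blast
  have a0: "a \<noteq> 0"
  proof
    assume "a = 0"
    then have "v1 = u1" using a(2) by (simp add: walkl_0)
    then show False using uv1 by simp
  qed
  have b0: "b \<noteq> 0"
  proof
    assume "b = 0"
    then have "u1 = v1" using b(2) by (simp add: walkl_0)
    then show False using uv1 by simp
  qed
  have abk: "k < a + b"
  proof (rule ccontr)
    assume "\<not> k < a + b"
    moreover have "walkl A (a + b) u1 u1" using walkl_trans[OF a(2) b(2)] .
    moreover have "walkl A 0 u1 u1" by (simp add: walkl_0)
    ultimately have "a + b = 0" using geo[OF kg AV u1V, of "a + b" u1 0] by simp
    then show False using a0 by simp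
  qed
  have nu: "\<not> (Suc c \<le> k \<and> walkl A c v1 u)" for c
    using stepC[OF kg AV vV v1V a1 a2 v12 b(2) b(1)] by blast
  have nv: "\<not> (Suc c \<le> k \<and> walkl A c u1 v)" for c
    using stepC[OF kg AV uV u1V a2 a1 u12 a(2) a(1)] by blast
  define S where "S = {z. (\<exists>c. Suc c \<le> k \<and> walkl A c u1 z) \<and> \<not>(\<exists>c. Suc c \<le> k \<and> walkl A c v1 z)}"
  have noloop: "\<not> walkl A c u1 u" if "Suc c \<le> k" for c
  proof
    assume "walkl A c u1 u"
    then have "walkl A (Suc c) u u" using a1 by (auto simp: walkl_Suc)
    moreover have "walkl A 0 u u" by (simp add: walkl_0)
    ultimately have "Suc c = 0" using geo[OF kg AV uV, of "Suc c" u 0] that by simp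
    then show False by simp
  qed
  have uS: "u \<notin> S" using noloop unfolding S_def by blast
  have Sout: "insert u S \<subseteq> outliers V A k v"
  proof
    fix z assume z: "z \<in> insert u S"
    show "z \<in> outliers V A k v"
    proof (cases "z = u")
      case True
      have "\<not> (m \<le> k \<and> walkl A m v u)" for m
      proof
        assume h: "m \<le> k \<and> walkl A m v u"
        show False
        proof (cases m)
          case 0 then show False using h assms(5) by (simp add: walkl_0)
        next
          case (Suc m')
          then obtain y where y: "(v,y) \<in> A" "walkl A m' y u" using h by (auto simp: walkl_Suc)
          then have "y = v1 \<or> y = u2" using vn by blast
          then show False
          proof
            assume "y = v1" then show False using nu y Suc h by blast
          next
            assume "y = u2"
            then have "walkl A (Suc m') u u" using y a1 by (auto simp: walkl_Suc)
            moreover have "walkl A 0 u u" by (simp add: walkl_0)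
            ultimately have "Suc m' = 0" using geo[OF kg AV uV, of "Suc m'" u 0] h Suc by simp
            then show False by simp
          qed
        qed
      qed
      then show ?thesis using True uV outliers_iff by metis
    next
      case False
      then have zS: "z \<in> S" using z by blast
      then obtain c where c: "Suc c \<le> k" "walkl A c u1 z" unfolding S_def by blast
      have zV: "z \<in> V" using walkl_V[OF AV u1V c(2)] .
      have "\<not> (m \<le> k \<and> walkl A m v z)" for m
      proof
        assume h: "m \<le> k \<and> walkl A m v z"
        show False
        proof (cases m)
          case 0 then have "z = v" using h by (simp add: walkl_0)
          then show False using nv c by blast
        next
          case (Suc m')
          then obtain y where y: "(v,y) \<in> A" "walkl A m' y z" using h by (auto simp: walkl_Suc)
          then have "y = v1 \<or> y = u2" using vn by blast
          then show False
          proof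
            assume "y = v1" then show False using zS y Suc h unfolding S_def by blast
          next
            assume "y = u2"
            then have "u1 = u2" using geo2[OF kg AV uV a1(1) a1(2) c(2), of m'] y h Suc c by simp
            then show False using u12 by simp
          qed
        qed
      qed
      then show ?thesis using zV outliers_iff by metis
    qed
  qed
  have oc: "finite (outliers V A k v) \<and> card (outliers V A k v) = 3"
    using outliers_card[OF assms(2) vV] .
  have "S \<subseteq> outliers V A k v" using Sout by simp
  then have fS: "finite S" using oc by (metis finite_subset)
  have "card (insert u S) \<le> 3" using card_mono[OF _ Sout] oc by metis
  then have cS: "card S \<le> 2" using uS fS by simp
  have "walkl A ((a - 1) + Suc 0) u1 v1" using a a0 by simp
  then obtain y where y: "walkl A (a - 1) u1 y" "walkl A (Suc 0) y v1" using walkl_split by metis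
  have yv1: "(y, v1) \<in> A" using y(2) by (simp add: walkl_arc)
  have yV: "y \<in> V" using walkl_V[OF AV u1V y(1)] .
  obtain y' where y': "(y,y') \<in> A" "y' \<noteq> v1" using other_nbr deg yV by metis
  have y'w: "walkl A a u1 y'" using walkl_snoc[OF y(1) y'(1)] a0 by simp
  have y'S: "y' \<in> S"
  proof -
    have "\<not> (Suc q \<le> k \<and> walkl A q v1 y')" for q
    proof
      assume h: "Suc q \<le> k \<and> walkl A q v1 y'"
      then have "walkl A (Suc q) y y'" using yv1 by (auto simp: walkl_Suc)
      moreover have "walkl A (Suc 0) y y'" using y'(1) by (simp add: walkl_arc)
      ultimately have "Suc q = Suc 0" using geo[OF kg AV yV, of "Suc q" y' "Suc 0"] h k2 by simp
      then have "y' = v1" using h by (simp add: walkl_0)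
      then show False using y'(2) by simp
    qed
    then show ?thesis unfolding S_def using y'w a(1) by blast
  qed
  define m where "m = k - b"
  have m0: "m \<noteq> 0" and mb: "m + b = k" and mk: "Suc m \<le> k" using b b0 unfolding m_def by auto
  obtain t where t: "walkl A (m - 1) u1 t" using exists_walk[OF AV deg u1V] by blast
  have tV: "t \<in> V" using walkl_V[OF AV u1V t] .
  obtain t1 t2 where t12: "out_nbrs A t = {t1, t2}" "t1 \<noteq> t2" using deg tV by (metis card_2_iff)
  have tarc: "(t,t1) \<in> A" "(t,t2) \<in> A" using t12 by (auto simp: out_nbrs_def set_eq_iff)
  have tS: "s \<in> S \<and> s \<noteq> y'" if "(t,s) \<in> A" for s
  proof -
    have sw: "walkl A m u1 s" using walkl_snoc[OF t that] m0 by simp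
    have "\<not> (Suc q \<le> k \<and> walkl A q v1 s)" for q
    proof
      assume h: "Suc q \<le> k \<and> walkl A q v1 s"
      have "walkl A (b + m) v1 s" using walkl_trans[OF b(2) sw] .
      then have "q = b + m" using geo[OF kg AV v1V, of q s "b + m"] h mb by simp
      then show False using h mb by simp
    qed
    then have "s \<in> S" unfolding S_def using sw mk by blast
    moreover have "s \<noteq> y'"
    proof
      assume "s = y'"
      then have "m = a" using geo[OF kg AV u1V sw, of a] y'w mk a(1) by simp
      then show False using abk mb by simp
    qed
    ultimately show ?thesis by blast
  qed
  have "{y', t1, t2} \<subseteq> S" using tS tarc y'S by blast
  moreover have "y' \<noteq> t1" "y' \<noteq> t2" using tS tarc by metis+
  moreover have "card {y', t1, t2} = 3" using calculation(2,3) t12(2) by simp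
  ultimately have "3 \<le> card S" using card_mono[OF fS] by metis
  then show False using cS by simp
qed

end
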